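(* In the setting below, let $U_2(v)$ and $\widetilde U_2(v)$ be defined, for $v\in(0,1)$ and $c\in(0,1)$, by $$U_2(v)=e^{-\frac{m^2v^2}{2}(1-c)}\Biggl\{\frac{1}{mv}\sqrt{\frac{2\pi}{c}}+\sum_{k=1}^{s}\frac1{k!}\sum_{j=0}^{s-k}\gamma_{k,j}\Bigl(\frac c2\Bigr)^{-\frac{3k+j}{2}}\Gamma\Bigl(\frac{3k+j}{2}\Bigr)\Biggr\},$$ $$\widetilde U_2(v)=e^{-\frac{m^2v^2}{2}(1-c)}\Biggl\{1+\sum_{k=1}^{s}\frac1{k!}\sum_{j=0}^{s-k}\gamma_{k,j}\Bigl(\frac c2\Bigr)^{-\frac{3k+j}{2}}\Gamma\Bigl(\frac{3k+j}{2}\Bigr)\Biggr\}.$$ Then for every $v\in(0,1)$ and $c\in(0,1)$, $I_2(v)<U_2(v)$. Moreover, if $mv\ge\sqrt2$ or $mv>\sqrt{2\pi/c}$, then $I_2(v)<\widetilde U_2(v)$.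
   Context: Let $p_1\ge1$, $p_2\ge0$, $p=p_1+p_2\ge2$, integers $n\ge n_1>p$, $\tau_1=(n_1+1)/(n+1)$, $s\ge1$ an integer. With $\psi^{(s)}$ the polygamma function, define for $r\ge2$: $\kappa^{(r)}=(-1)^{r-1}[(p_1+\tau_1p_2)^{r}\psi^{(r-1)}(\tfrac12(np_1+n_1p_2))-\sum_{\ell=1}^{p_1}\psi^{(r-1)}(\tfrac12(n-p_1+\ell))-\tau_1^r\sum_{\ell=1}^{p_2}\psi^{(r-1)}(\tfrac12(n_1-p+\ell))]$, $\widetilde\kappa^{(r)}=\kappa^{(r)}/(\kappa^{(2)})^{r/2}$, $\gamma_{k,j}=\sum_{s_1+\dots+s_k=j,\ s_i\ge0}\prod_{i=1}^k\widetilde\kappa^{(s_i+3)}/(s_i+3)!$, $m=\frac{n_1-p-\frac12}{2}(\kappa^{(2)})^{1/2}$, and $I_2(v)=2\Bigl\{\int_{mv}^\infty t^{-1}e^{-t^2/2}dt+\sum_{k=1}^s\frac1{k!}\sum_{j=0}^{s-k}\gamma_{k,j}\int_{mv}^\infty t^{3k+j-1}e^{-t^2/2}dt\Bigr\}$. *)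

theory Defs
  imports "HOL-Analysis.Analysis"
begin

definition tau1 :: "nat \<Rightarrow> nat \<Rightarrow> real" where
  "tau1 n n1 = (real n1 + 1) / (real n + 1)"

definition kappa :: "nat \<Rightarrow> nat \<Rightarrow> nat \<Rightarrow> nat \<Rightarrow> nat \<Rightarrow> real" where
  "kappa p1 p2 n n1 r = (-1) ^ (r - 1) *
     ((real p1 + tau1 n n1 * real p2) ^ r
        * Polygamma (r - 1) ((real n * real p1 + real n1 * real p2) / 2)
      - (\<Sum>l=1..p1. Polygamma (r - 1) ((real n - real p1 + real l) / 2))
      - tau1 n n1 ^ r
        * (\<Sum>l=1..p2. Polygamma (r - 1) ((real n1 - real (p1 + p2) + real l) / 2)))"

definition kappa_tilde :: "nat \<Rightarrow> nat \<Rightarrow> nat \<Rightarrow> nat \<Rightarrow> nat \<Rightarrow> real" where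
  "kappa_tilde p1 p2 n n1 r = kappa p1 p2 n n1 r / (kappa p1 p2 n n1 2 powr (real r / 2))"

text \<open>gamma_{k,j}: sum over (s_1,...,s_k) (indexed 0..k-1) of nonnegative integers summing to j\<close>
definition gamma_kj :: "nat \<Rightarrow> nat \<Rightarrow> nat \<Rightarrow> nat \<Rightarrow> nat \<Rightarrow> nat \<Rightarrow> real" where
  "gamma_kj p1 p2 n n1 k j =
     (\<Sum>\<sigma> \<in> {\<sigma> :: nat \<Rightarrow> nat. (\<forall>i. k \<le> i \<longrightarrow> \<sigma> i = 0) \<and> (\<Sum>i<k. \<sigma> i) = j}.
        \<Prod>i<k. kappa_tilde p1 p2 n n1 (\<sigma> i + 3) / fact (\<sigma> i + 3))"

definition m_param :: "nat \<Rightarrow> nat \<Rightarrow> nat \<Rightarrow> nat \<Rightarrow> real" where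
  "m_param p1 p2 n n1 = (real n1 - real (p1 + p2) - 1/2) / 2 * sqrt (kappa p1 p2 n n1 2)"

definition I2 :: "nat \<Rightarrow> nat \<Rightarrow> nat \<Rightarrow> nat \<Rightarrow> nat \<Rightarrow> real \<Rightarrow> real" where
  "I2 p1 p2 n n1 s v = (let a = m_param p1 p2 n n1 * v in
     2 * ((LBINT t:{a..}. inverse t * exp (- (t^2) / 2))
        + (\<Sum>k=1..s. 1 / fact k * (\<Sum>j=0..s-k. gamma_kj p1 p2 n n1 k j *
              (LBINT t:{a..}. t ^ (3*k + j - 1) * exp (- (t^2) / 2))))))"

definition U2_sum :: "nat \<Rightarrow> nat \<Rightarrow> nat \<Rightarrow> nat \<Rightarrow> nat \<Rightarrow> real \<Rightarrow> real" where
  "U2_sum p1 p2 n n1 s c = (\<Sum>k=1..s. 1 / fact k * (\<Sum>j=0..s-k. gamma_kj p1 p2 n n1 k j *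
       (c/2) powr (- real (3*k + j) / 2) * Gamma (real (3*k + j) / 2)))"

definition U2 :: "nat \<Rightarrow> nat \<Rightarrow> nat \<Rightarrow> nat \<Rightarrow> nat \<Rightarrow> real \<Rightarrow> real \<Rightarrow> real" where
  "U2 p1 p2 n n1 s v c = (let a = m_param p1 p2 n n1 * v in
     exp (- (a^2) / 2 * (1 - c)) * (1 / a * sqrt (2 * pi / c) + U2_sum p1 p2 n n1 s c))"

definition U2_tilde :: "nat \<Rightarrow> nat \<Rightarrow> nat \<Rightarrow> nat \<Rightarrow> nat \<Rightarrow> real \<Rightarrow> real \<Rightarrow> real" where
  "U2_tilde p1 p2 n n1 s v c = (let a = m_param p1 p2 n n1 * v in
     exp (- (a^2) / 2 * (1 - c)) * (1 + U2_sum p1 p2 n n1 s c))"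

end

theory Submission
  imports Defs "HOL-Real_Asymp.Real_Asymp"
begin

definition ser :: "nat \<Rightarrow> real \<Rightarrow> real" where
  "ser r w = (\<Sum>k. inverse ((w + real k) ^ r))"

lemma ser_sums: assumes "w > 0" "r \<ge> 2" shows "(\<lambda>k. inverse ((w + real k) ^ r)) sums ser r w"
  using Polygamma_converges'[of w r] assms unfolding ser_def by (simp add: summable_sums)

lemma Polygamma_ser: assumes "w > 0" "r \<ge> 2"
  shows "Polygamma (r - 1) w = (-1) ^ r * fact (r - 1) * ser r w"
proof -
  have "(\<lambda>k. inverse ((w + real k) ^ Suc (r - 1))) sums ((-1) ^ Suc (r - 1) * Polygamma (r - 1) w / fact (r - 1))"
    by (rule Polygamma_LIMSEQ) (use assms in auto)
  moreover have "Suc (r - 1) = r" using assms by auto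
  ultimately have H: "ser r w = (-1) ^ r * Polygamma (r - 1) w / fact (r - 1)"
    using ser_sums[OF assms] sums_unique2 by metis
  have e: "(-1::real) ^ r * (-1) ^ r = 1" by (simp add: power_mult_distrib[symmetric])
  have "(-1) ^ r * fact (r - 1) * ser r w = ((-1) ^ r * (-1) ^ r) * Polygamma (r - 1) w"
    unfolding H by simp
  then show ?thesis using e by simp
qed

lemma inv_pow_lim: assumes "w > 0" "q \<ge> 1"
  shows "(\<lambda>k. inverse ((w + real k) ^ q)) \<longlonglongrightarrow> 0"
proof -
  have "filterlim (\<lambda>k. w + real k) at_top sequentially"
    by (intro filterlim_tendsto_add_at_top[OF tendsto_const] filterlim_real_sequentially)
  then have "filterlim (\<lambda>k. (w + real k) ^ q) at_top sequentially"
    using assms by (intro filterlim_pow_at_top) auto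
  then show ?thesis by (rule tendsto_inverse_0_at_top)
qed

lemma tele_lower: fixes x :: real assumes "x > 0" "q \<ge> 1"
  shows "inverse (x ^ q) - inverse ((x + 1) ^ q) < real q * inverse (x ^ Suc q)"
proof -
  have b: "1 + real q * (- 1 / (x + 1)) \<le> (1 + (- 1 / (x + 1))) ^ q"
    by (rule Bernoulli_inequality) (use assms in \<open>simp add: field_simps\<close>)
  have e: "1 + (- 1 / (x + 1)) = x / (x + 1)" using assms by (simp add: field_simps)
  have "1 - real q / x < (x / (x+1)) ^ q"
  proof -
    have "real q / (x + 1) < real q / x" using assms by (intro divide_strict_left_mono) auto
    then show ?thesis using b e by simp
  qed
  then have "1 - real q / x < x ^ q / (x+1) ^ q" by (simp add: power_divide)
  then have "x ^ q * (1 - real q / x) < x ^ q * (x ^ q / (x+1) ^ q)"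
    using assms by (intro mult_strict_left_mono) auto
  then have h: "x ^ q - real q * x ^ q / x < x ^ q * x ^ q / (x+1) ^ q" by (simp add: algebra_simps)
  have xq: "x ^ q > 0" "(x+1)^q > 0" using assms by auto
  have "inverse (x ^ q) - inverse ((x + 1) ^ q) - real q * inverse (x ^ Suc q)
        = (x ^ q - real q * x ^ q / x - x ^ q * x ^ q / (x+1) ^ q) / (x^q * x^q)"
    using assms xq by (simp add: field_simps)
  also have "\<dots> < 0" using h xq by (intro divide_neg_pos) auto
  finally show ?thesis by simp
qed

lemma amgm_inv: fixes x s :: real and m :: nat assumes "0 \<le> s" "s < x"
  shows "2 * inverse (x ^ m) \<le> inverse ((x - s) ^ m) + inverse ((x + s) ^ m)"
proof -
  define \<alpha> where "\<alpha> = inverse ((x - s) ^ m)"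
  define \<beta> where "\<beta> = inverse ((x + s) ^ m)"
  define \<gamma> where "\<gamma> = inverse (x ^ m)"
  have pos: "\<alpha> > 0" "\<beta> > 0" "\<gamma> > 0" using assms by (auto simp: \<alpha>_def \<beta>_def \<gamma>_def)
  have "(x - s) * (x + s) \<le> x ^ 2" by (simp add: algebra_simps power2_eq_square)
  moreover have p: "(x - s) * (x + s) > 0" using assms by (intro mult_pos_pos) auto
  ultimately have "((x - s) * (x + s)) ^ m \<le> (x ^ 2) ^ m" by (intro power_mono) auto
  moreover have "((x - s) * (x + s)) ^ m > 0" using p by simp
  ultimately have "inverse ((x ^ 2) ^ m) \<le> inverse (((x - s) * (x + s)) ^ m)"
    by (intro le_imp_inverse_le) auto
  moreover have "\<gamma> ^ 2 = inverse ((x ^ 2) ^ m)" unfolding \<gamma>_def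
    by (metis power_inverse power_mult mult.commute)
  moreover have "\<alpha> * \<beta> = inverse (((x - s) * (x + s)) ^ m)" unfolding \<alpha>_def \<beta>_def
    by (simp add: power_mult_distrib)
  ultimately have ab: "\<gamma> ^ 2 \<le> \<alpha> * \<beta>" by simp
  have "(2 * \<gamma>) ^ 2 = 4 * \<gamma> ^ 2" by (simp add: power_mult_distrib)
  also have "\<dots> \<le> 4 * (\<alpha> * \<beta>)" using ab by simp
  also have "\<dots> \<le> (\<alpha> - \<beta>) ^ 2 + 4 * (\<alpha> * \<beta>)" by simp
  also have "\<dots> = (\<alpha> + \<beta>) ^ 2" by (simp add: power2_eq_square algebra_simps)
  finally have sq: "(2 * \<gamma>) ^ 2 \<le> (\<alpha> + \<beta>) ^ 2" .
  have "2 * \<gamma> \<le> \<alpha> + \<beta>" by (rule power2_le_imp_le[OF sq]) (use pos in auto)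
  then show ?thesis by (simp add: \<alpha>_def \<beta>_def \<gamma>_def)
qed

lemma inv_pow_deriv_aux: fixes y :: real assumes "y \<noteq> 0" "q \<ge> 1"
  shows "inverse (y ^ q) * (real q * y ^ (q - Suc 0)) * inverse (y ^ q) = real q * inverse (y ^ Suc q)"
proof -
  obtain q' where q: "q = Suc q'" using assms by (cases q) auto
  show ?thesis using assms unfolding q by (simp add: field_simps)
qed

lemma tele_upper: fixes x :: real assumes "x > 1/2" "q \<ge> 1"
  shows "real q * inverse (x ^ Suc q) \<le> inverse ((x - 1/2) ^ q) - inverse ((x + 1/2) ^ q)"
proof -
  define h where "h = (\<lambda>s. inverse ((x - s) ^ q) - inverse ((x + s) ^ q) - 2 * s * real q * inverse (x ^ Suc q))"
  define h' where "h' = (\<lambda>s. real q * inverse ((x - s) ^ Suc q) + real q * inverse ((x + s) ^ Suc q) - 2 * real q * inverse (x ^ Suc q))"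
  have "h 0 \<le> h (1/2)"
  proof (rule deriv_nonneg_imp_mono[of 0 "1/2" h h'])
    fix s :: real assume s: "s \<in> {0..1/2}"
    then have xs: "x - s > 0" "x + s > 0" using assms by auto
    have d1: "((\<lambda>s. inverse ((x - s) ^ q)) has_real_derivative real q * inverse ((x - s) ^ Suc q)) (at s)"
      by (rule derivative_eq_intros refl)+ (use xs inv_pow_deriv_aux[of "x - s" q] assms in auto)
    have d2: "((\<lambda>s. inverse ((x + s) ^ q)) has_real_derivative - real q * inverse ((x + s) ^ Suc q)) (at s)"
      by (rule derivative_eq_intros refl)+ (use xs inv_pow_deriv_aux[of "x + s" q] assms in auto)
    have d3: "((\<lambda>s. 2 * s * real q * inverse (x ^ Suc q)) has_real_derivative 2 * real q * inverse (x ^ Suc q)) (at s)"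
      by (rule derivative_eq_intros refl)+ simp
    show "(h has_real_derivative h' s) (at s)"
      unfolding h_def h'_def using DERIV_diff[OF DERIV_diff[OF d1 d2] d3] by simp
    have A: "0 \<le> inverse ((x - s) ^ Suc q) + inverse ((x + s) ^ Suc q) - 2 * inverse (x ^ Suc q)"
      using amgm_inv[of s x "Suc q"] s assms by auto
    have "0 \<le> real q * (inverse ((x - s) ^ Suc q) + inverse ((x + s) ^ Suc q) - 2 * inverse (x ^ Suc q))"
      using A by simp
    then show "h' s \<ge> 0" unfolding h'_def by (simp only: ring_distribs mult.assoc mult.left_commute)
  qed simp
  then show ?thesis by (simp add: h_def)
qed


lemma ser_lower: assumes "w > 0" "q \<ge> 1"
  shows "inverse (w ^ q) < real q * ser (Suc q) w"
proof -
  let ?f = "\<lambda>k::nat. inverse ((w + real k) ^ q)"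
  have t: "(\<lambda>k. ?f k - ?f (Suc k)) sums (?f 0 - 0)"
    by (rule telescope_sums'[OF inv_pow_lim]) (use assms in auto)
  have s: "(\<lambda>k. real q * inverse ((w + real k) ^ Suc q)) sums (real q * ser (Suc q) w)"
    by (rule sums_mult[OF ser_sums]) (use assms in auto)
  have d: "(\<lambda>k. real q * inverse ((w + real k) ^ Suc q) - (?f k - ?f (Suc k))) sums
            (real q * ser (Suc q) w - (?f 0 - 0))"
    by (rule sums_diff[OF s t])
  have "0 < real q * ser (Suc q) w - (?f 0 - 0)"
  proof -
    have "0 < suminf (\<lambda>k. real q * inverse ((w + real k) ^ Suc q) - (?f k - ?f (Suc k)))"
    proof (rule suminf_pos)
      show "summable (\<lambda>k. real q * inverse ((w + real k) ^ Suc q) - (?f k - ?f (Suc k)))"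
        using d by (rule sums_summable)
      fix k :: nat
      have e: "w + real (Suc k) = (w + real k) + 1" by simp
      have "w + real k > 0" using assms by auto
      from tele_lower[OF this assms(2)]
      show "0 < real q * inverse ((w + real k) ^ Suc q) - (?f k - ?f (Suc k))"
        unfolding e by linarith
    qed
    then show ?thesis by (simp only: sums_unique[OF d, symmetric])
  qed
  then show ?thesis by simp
qed

lemma ser_upper: assumes "w > 1/2" "q \<ge> 1"
  shows "real q * ser (Suc q) w \<le> inverse ((w - 1/2) ^ q)"
proof -
  let ?f = "\<lambda>k::nat. inverse ((w - 1/2 + real k) ^ q)"
  have t: "(\<lambda>k. ?f k - ?f (Suc k)) sums (?f 0 - 0)"
    by (rule telescope_sums'[OF inv_pow_lim]) (use assms in auto)
  have s: "(\<lambda>k. real q * inverse ((w + real k) ^ Suc q)) sums (real q * ser (Suc q) w)"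
    by (rule sums_mult[OF ser_sums]) (use assms in auto)
  have "real q * ser (Suc q) w \<le> ?f 0 - 0"
  proof (rule sums_le[OF _ s t])
    fix k :: nat
    have "w + real k > 1/2" using assms by auto
    from tele_upper[OF this assms(2)]
    show "real q * inverse ((w + real k) ^ Suc q) \<le> ?f k - ?f (Suc k)"
      by (simp add: algebra_simps)
  qed
  then show ?thesis by simp
qed


lemma tangent_pow: fixes b m :: real assumes "b \<ge> 0" "m > 0" "q \<ge> 1"
  shows "m ^ q + real q * m ^ (q - 1) * (b - m) \<le> b ^ q"
proof -
  have "1 + real q * (b / m - 1) \<le> (1 + (b / m - 1)) ^ q"
    by (rule Bernoulli_inequality) (use assms in simp)
  then have "1 + real q * (b / m - 1) \<le> (b / m) ^ q" by simp
  then have "m ^ q * (1 + real q * (b / m - 1)) \<le> m ^ q * (b / m) ^ q"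
    using assms by (intro mult_left_mono) auto
  moreover have "m ^ q * (b / m) ^ q = b ^ q" using assms by (simp add: power_divide)
  moreover have "m ^ q * (1 + real q * (b / m - 1)) = m ^ q + real q * m ^ (q - 1) * (b - m)"
  proof -
    obtain q' where q: "q = Suc q'" using assms by (cases q) auto
    show ?thesis using assms unfolding q by (simp add: field_simps)
  qed
  ultimately show ?thesis by simp
qed

lemma combo:
  fixes q :: nat and A \<tau> m T :: real and x y :: "nat \<Rightarrow> real" and I J :: "nat set"
  assumes q: "q \<ge> 1" and m: "m > 0" and tau: "\<tau> > 0" and fin: "finite I" "finite J"
    and xpos: "\<And>i. i \<in> I \<Longrightarrow> x i > 0" and ypos: "\<And>j. j \<in> J \<Longrightarrow> y j > 0"
    and A: "A = real (card I) + \<tau> * real (card J)"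
    and T: "sum x I + sum y J \<le> T" and mT: "m * T = A"
  shows "A * m ^ q \<le> (\<Sum>i\<in>I. inverse (x i ^ q)) + \<tau> ^ Suc q * (\<Sum>j\<in>J. inverse (y j ^ q))"
proof -
  define c where "c = real q * m ^ (q - 1)"
  have c0: "c \<ge> 0" using m by (simp add: c_def)
  have hx: "m ^ q + c * (1 / x i - m) \<le> inverse (x i ^ q)" if "i \<in> I" for i
    using tangent_pow[of "1 / x i" m q] xpos[OF that] m q by (simp add: c_def power_one_over inverse_eq_divide)
  have hy: "\<tau> * m ^ q + c * (\<tau> * (\<tau> / y j - m)) \<le> \<tau> ^ Suc q * inverse (y j ^ q)" if "j \<in> J" for j
  proof -
    have "m ^ q + c * (\<tau> / y j - m) \<le> (\<tau> / y j) ^ q"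
      using tangent_pow[of "\<tau> / y j" m q] ypos[OF that] m q tau by (simp add: c_def)
    then have "\<tau> * (m ^ q + c * (\<tau> / y j - m)) \<le> \<tau> * (\<tau> / y j) ^ q"
      using tau by (intro mult_left_mono) auto
    moreover have "\<tau> * (\<tau> / y j) ^ q = \<tau> ^ Suc q * inverse (y j ^ q)"
      by (simp only: power_divide power_Suc divide_inverse mult.assoc power_mult_distrib power_inverse)
    ultimately show ?thesis by (simp add: algebra_simps)
  qed
  have ix: "2 * m - m ^ 2 * x i \<le> 1 / x i" if "i \<in> I" for i
  proof -
    have xi: "x i > 0" using xpos[OF that] .
    have "0 \<le> (1 - m * x i) ^ 2" by simp
    then have "(2 * m - m ^ 2 * x i) * x i \<le> 1" by (simp add: power2_eq_square algebra_simps)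
    then show ?thesis using xi by (simp add: field_simps)
  qed
  have iy: "2 * m * \<tau> - m ^ 2 * y j \<le> \<tau> * (\<tau> / y j)" if "j \<in> J" for j
  proof -
    have yj: "y j > 0" using ypos[OF that] .
    have "0 \<le> (\<tau> - m * y j) ^ 2" by simp
    then have "(2 * m * \<tau> - m ^ 2 * y j) * y j \<le> \<tau> * \<tau>" by (simp add: power2_eq_square algebra_simps)
    then show ?thesis using yj by (simp add: field_simps)
  qed
  define S where "S = (\<Sum>i\<in>I. 1 / x i) + (\<Sum>j\<in>J. \<tau> * (\<tau> / y j))"
  have S1: "(\<Sum>i\<in>I. 2 * m - m ^ 2 * x i) \<le> (\<Sum>i\<in>I. 1 / x i)" by (rule sum_mono) (rule ix)
  have S2: "(\<Sum>j\<in>J. 2 * m * \<tau> - m ^ 2 * y j) \<le> (\<Sum>j\<in>J. \<tau> * (\<tau> / y j))" by (rule sum_mono) (rule iy)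
  have "(\<Sum>i\<in>I. 2 * m - m ^ 2 * x i) + (\<Sum>j\<in>J. 2 * m * \<tau> - m ^ 2 * y j)
        = 2 * m * A - m ^ 2 * (sum x I + sum y J)"
    by (simp add: sum_subtractf sum_distrib_left[symmetric] sum_distrib_right[symmetric] A algebra_simps)
  also have "\<dots> \<ge> 2 * m * A - m ^ 2 * T" using T m by (simp add: mult_left_mono)
  finally have "S \<ge> 2 * m * A - m ^ 2 * T" using S1 S2 unfolding S_def by linarith
  moreover have "m ^ 2 * T = m * A" using mT by (simp add: power2_eq_square)
  ultimately have Sge: "S \<ge> m * A" by (simp add: mult.commute)
  have "(\<Sum>i\<in>I. m ^ q + c * (1 / x i - m)) + (\<Sum>j\<in>J. \<tau> * m ^ q + c * (\<tau> * (\<tau> / y j - m)))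
        = A * m ^ q + c * (S - m * A)"
    by (simp add: sum.distrib sum_subtractf sum_distrib_left A S_def algebra_simps)
  also have "\<dots> \<ge> A * m ^ q" using c0 Sge by simp
  finally have "A * m ^ q \<le> (\<Sum>i\<in>I. m ^ q + c * (1 / x i - m)) + (\<Sum>j\<in>J. \<tau> * m ^ q + c * (\<tau> * (\<tau> / y j - m)))" .
  also have "\<dots> \<le> (\<Sum>i\<in>I. inverse (x i ^ q)) + (\<Sum>j\<in>J. \<tau> ^ Suc q * inverse (y j ^ q))"
    by (intro add_mono sum_mono hx hy)
  finally show ?thesis by (simp add: sum_distrib_left)
qed


lemma kappa_pos:
  assumes p1: "p1 \<ge> 1" and p: "p1 + p2 \<ge> 2" and nn1: "n \<ge> n1" and n1p: "n1 > p1 + p2" and r: "r \<ge> 2"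
  shows "kappa p1 p2 n n1 r > 0"
proof -
  obtain q where rq: "r = Suc q" and q: "q \<ge> 1" using r by (cases r) auto
  define \<tau> where "\<tau> = tau1 n n1"
  define A where "A = real p1 + \<tau> * real p2"
  define X where "X = (real n * real p1 + real n1 * real p2) / 2"
  define x where "x = (\<lambda>l::nat. (real n - real p1 + real l) / 2)"
  define y where "y = (\<lambda>l::nat. (real n1 - real (p1 + p2) + real l) / 2)"
  define T where "T = X - 1/2"
  have tau: "\<tau> > 0" unfolding \<tau>_def tau1_def by simp
  have Apos: "A > 0" unfolding A_def using p1 tau by (simp add: add_pos_nonneg)
  have nge: "real n \<ge> 3" using nn1 n1p p by linarith
  have "real n * real p1 \<ge> real n" using p1 by (simp add: mult_le_cancel_left1)
  moreover have "real n1 * real p2 \<ge> 0" by simp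
  ultimately have "1 < real n * real p1 + real n1 * real p2" using nge by linarith
  then have X: "X > 1/2" unfolding X_def by simp
  have Tpos: "T > 0" using X by (simp add: T_def)
  have xpos: "x l > 0" if "l \<in> {1..p1}" for l using that nn1 n1p by (auto simp: x_def)
  have ypos: "y l > 0" if "l \<in> {1..p2}" for l using that nn1 n1p by (auto simp: y_def)
  have gx: "2 * (\<Sum>l=1..p1. real l) = real p1 * (real p1 + 1)"
    using double_gauss_sum_from_Suc_0[of p1] by simp
  have gy: "2 * (\<Sum>l=1..p2. real l) = real p2 * (real p2 + 1)"
    using double_gauss_sum_from_Suc_0[of p2] by simp
  have sx: "2 * (\<Sum>l=1..p1. x l) = real p1 * (real n - real p1) + 2 * (\<Sum>l=1..p1. real l) / 2"
    by (simp add: x_def sum_divide_distrib[symmetric] sum.distrib)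
  have sy: "2 * (\<Sum>l=1..p2. y l) = real p2 * (real n1 - real p1 - real p2) + 2 * (\<Sum>l=1..p2. real l) / 2"
    by (simp add: y_def sum_divide_distrib[symmetric] sum.distrib)
  have pp: "(real p1 + real p2) * (real p1 + real p2 - 1) \<ge> 2 * 1"
  proof (rule mult_mono)
    show "2 \<le> real p1 + real p2" using p by linarith
    show "1 \<le> real p1 + real p2 - 1" using p by linarith
  qed auto
  have Tb: "(\<Sum>l=1..p1. x l) + (\<Sum>l=1..p2. y l) \<le> T"
  proof -
    have "2 * ((\<Sum>l=1..p1. x l) + (\<Sum>l=1..p2. y l)) \<le> 2 * T"
      using sx sy gx gy pp unfolding T_def X_def by (simp add: algebra_simps)
    then show ?thesis by simp
  qed
  define m where "m = A / T"
  have mpos: "m > 0" using Apos Tpos by (simp add: m_def)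
  have mT: "m * T = A" using Tpos by (simp add: m_def)
  have Aeq: "A = real (card {1..p1}) + \<tau> * real (card {1..p2})" by (simp add: A_def)
  have C: "A * m ^ q \<le> (\<Sum>l\<in>{1..p1}. inverse (x l ^ q)) + \<tau> ^ Suc q * (\<Sum>l\<in>{1..p2}. inverse (y l ^ q))"
    by (rule combo[OF q mpos tau _ _ xpos ypos Aeq Tb mT]) auto
  have L1: "A ^ Suc q * (real q * ser (Suc q) X) \<le> A * m ^ q"
  proof -
    have "A ^ Suc q * (real q * ser (Suc q) X) \<le> A ^ Suc q * inverse (T ^ q)"
      using ser_upper[OF X q] Apos unfolding T_def by (intro mult_left_mono) auto
    also have "\<dots> = A * m ^ q" by (simp add: m_def divide_inverse power_mult_distrib power_inverse)
    finally show ?thesis .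
  qed
  have L2: "(\<Sum>l\<in>{1..p1}. inverse (x l ^ q)) < (\<Sum>l\<in>{1..p1}. real q * ser (Suc q) (x l))"
    by (rule sum_strict_mono) (use p1 xpos ser_lower q in auto)
  have L3: "(\<Sum>l\<in>{1..p2}. inverse (y l ^ q)) \<le> (\<Sum>l\<in>{1..p2}. real q * ser (Suc q) (y l))"
    by (rule sum_mono) (use ypos ser_lower q in \<open>auto intro: less_imp_le\<close>)
  have key: "A ^ Suc q * (real q * ser (Suc q) X) <
      (\<Sum>l\<in>{1..p1}. real q * ser (Suc q) (x l)) + \<tau> ^ Suc q * (\<Sum>l\<in>{1..p2}. real q * ser (Suc q) (y l))"
  proof -
    have "\<tau> ^ Suc q * (\<Sum>l\<in>{1..p2}. inverse (y l ^ q)) \<le> \<tau> ^ Suc q * (\<Sum>l\<in>{1..p2}. real q * ser (Suc q) (y l))"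
      using L3 tau by (intro mult_left_mono) auto
    then show ?thesis using L1 L2 C by linarith
  qed
  then have key': "A ^ Suc q * ser (Suc q) X < (\<Sum>l\<in>{1..p1}. ser (Suc q) (x l)) + \<tau> ^ Suc q * (\<Sum>l\<in>{1..p2}. ser (Suc q) (y l))"
  proof -
    have e1: "A ^ Suc q * (real q * ser (Suc q) X) = real q * (A ^ Suc q * ser (Suc q) X)"
      by (simp only: mult.left_commute)
    have e2: "(\<Sum>l\<in>{1..p1}. real q * ser (Suc q) (x l)) + \<tau> ^ Suc q * (\<Sum>l\<in>{1..p2}. real q * ser (Suc q) (y l))
      = real q * ((\<Sum>l\<in>{1..p1}. ser (Suc q) (x l)) + \<tau> ^ Suc q * (\<Sum>l\<in>{1..p2}. ser (Suc q) (y l)))"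
      by (simp only: sum_distrib_left[symmetric] distrib_left mult.left_commute)
    have "real q > 0" using q by simp
    then show ?thesis using key unfolding e1 e2 by simp
  qed
  have PX: "Polygamma q X = (-1) ^ Suc q * fact q * ser (Suc q) X"
    using Polygamma_ser[of X "Suc q"] X q by simp
  have Px: "(\<Sum>l=1..p1. Polygamma q (x l)) = (-1) ^ Suc q * fact q * (\<Sum>l=1..p1. ser (Suc q) (x l))"
    unfolding sum_distrib_left using Polygamma_ser[of _ "Suc q"] xpos q by (intro sum.cong) auto
  have Py: "(\<Sum>l=1..p2. Polygamma q (y l)) = (-1) ^ Suc q * fact q * (\<Sum>l=1..p2. ser (Suc q) (y l))"
    unfolding sum_distrib_left using Polygamma_ser[of _ "Suc q"] ypos q by (intro sum.cong) auto
  have K: "kappa p1 p2 n n1 r = (-1) ^ q * (A ^ Suc q * Polygamma q X - (\<Sum>l=1..p1. Polygamma q (x l))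
       - \<tau> ^ Suc q * (\<Sum>l=1..p2. Polygamma q (y l)))"
    unfolding kappa_def rq A_def X_def x_def y_def \<tau>_def by simp
  have "kappa p1 p2 n n1 r = ((-1) ^ q * (-1) ^ Suc q) * fact q * (A ^ Suc q * ser (Suc q) X - (\<Sum>l=1..p1. ser (Suc q) (x l))
       - \<tau> ^ Suc q * (\<Sum>l=1..p2. ser (Suc q) (y l)))"
    unfolding K PX Px Py by (simp add: algebra_simps)
  also have "(-1::real) ^ q * (-1) ^ Suc q = -1" by (simp add: power_mult_distrib[symmetric])
  finally have "kappa p1 p2 n n1 r = fact q * ((\<Sum>l=1..p1. ser (Suc q) (x l))
       + \<tau> ^ Suc q * (\<Sum>l=1..p2. ser (Suc q) (y l)) - A ^ Suc q * ser (Suc q) X)" by (simp add: algebra_simps)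
  also have "\<dots> > 0" using key' by (intro mult_pos_pos) auto
  finally show ?thesis .
qed



lemma Gamma_set_integrable:
  fixes x :: real assumes x: "x > 0"
  shows "set_integrable lborel {0<..} (\<lambda>t. t powr (x - 1) / exp t)"
    and "(LBINT t:{0<..}. t powr (x - 1) / exp t) = Gamma x"
proof -
  have h0: "((\<lambda>t. t powr (x - 1) / exp t) has_integral Gamma x) {0..}"
    by (rule Gamma_integral_real[OF x])
  hence "((\<lambda>t. if t \<in> {0<..} then t powr (x - 1) / exp t else 0) has_integral Gamma x) {0..}"
    by (rule has_integral_spike [of "{0}", rotated 2]) auto
  hence h: "((\<lambda>t. t powr (x - 1) / exp t) has_integral Gamma x) {0<..}"
    by (subst (asm) has_integral_restrict) auto
  have ai: "(\<lambda>t. t powr (x - 1) / exp t) absolutely_integrable_on {0<..}"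
    by (rule nonnegative_absolutely_integrable_1) (use h in \<open>auto simp: has_integral_integrable\<close>)
  have meas: "(\<lambda>t. indicator {0<..} t *\<^sub>R (t powr (x - 1) / exp t)) \<in> borel_measurable lborel"
    by measurable
  show si: "set_integrable lborel {0<..} (\<lambda>t. t powr (x - 1) / exp t)"
    using ai unfolding set_integrable_def
    by (subst (asm) integrable_completion) (use meas in auto)
  show "(LBINT t:{0<..}. t powr (x - 1) / exp t) = Gamma x"
    using set_borel_integral_eq_integral(2)[OF si] h by (simp add: integral_unique)
qed


lemma sqrt_pow_powr: fixes y :: real assumes "y > 0" shows "sqrt y ^ k = y powr (real k / 2)"
proof -
  have "sqrt y ^ k = (y powr (1/2)) ^ k" using assms by (simp add: powr_half_sqrt)
  also have "\<dots> = (y powr (1/2)) powr real k" using assms by (simp add: powr_realpow)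
  also have "\<dots> = y powr (real k / 2)" by (simp add: powr_powr)
  finally show ?thesis .
qed

lemma gauss_mom:
  fixes c :: real and q :: nat assumes c: "c > 0" and q: "q \<ge> 1"
  shows "set_integrable lborel {0<..} (\<lambda>t. t ^ (q - 1) * exp (- (c * t ^ 2) / 2))"
    and "(LBINT t:{0<..}. t ^ (q - 1) * exp (- (c * t ^ 2) / 2)) = (c / 2) powr (- real q / 2) * Gamma (real q / 2) / 2"
proof -
  define f where "f = (\<lambda>t::real. t ^ (q - 1) * exp (- (c * t ^ 2) / 2))"
  define g where "g = (\<lambda>s::real. sqrt (2 * s / c))"
  define g' where "g' = (\<lambda>s::real. 1 / (c * sqrt (2 * s / c)))"
  define K where "K = (1 / c) * (2 / c) powr (real q / 2 - 1)"
  define Gf where "Gf = (\<lambda>t::real. t powr (real q / 2 - 1) / exp t)"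
  have xq: "real q / 2 > 0" using q by simp
  note GI = Gamma_set_integrable[OF xq, folded Gf_def]
  have fg: "f (g s) * g' s = K * Gf s" if s: "s > 0" for s
  proof -
    have y: "2 * s / c > 0" using s c by simp
    have "g s ^ (q - 1) = (2 * s / c) powr (real (q - 1) / 2)"
      unfolding g_def using y by (rule sqrt_pow_powr)
    moreover have "exp (- (c * g s ^ 2) / 2) = exp (- s)"
    proof -
      have "g s ^ 2 = 2 * s / c" unfolding g_def using y by simp
      then have "c * g s ^ 2 = 2 * s" using c by simp
      then show ?thesis by simp
    qed
    moreover have "g' s = (1 / c) * (2 * s / c) powr (- (1 / 2))"
    proof -
      have e: "(2 * s / c) powr (1 / 2) = sqrt (2 * s / c)"
        by (rule powr_half_sqrt) (use y in simp)
      have e2: "(2 * s / c) powr (- (1 / 2)) = inverse (sqrt (2 * s / c))"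
        by (subst powr_minus) (subst e, rule refl)
      show ?thesis unfolding g'_def e2 by (simp only: divide_inverse inverse_mult_distrib mult_1_left)
    qed
    ultimately have "f (g s) * g' s = (1 / c) * ((2 * s / c) powr (real (q - 1) / 2) * (2 * s / c) powr (- (1 / 2))) * exp (- s)"
      unfolding f_def by (simp add: algebra_simps)
    also have "(2 * s / c) powr (real (q - 1) / 2) * (2 * s / c) powr (- (1 / 2)) = (2 * s / c) powr (real q / 2 - 1)"
    proof -
      have "real (q - 1) / 2 + - (1 / 2) = real q / 2 - 1" using q by (simp add: of_nat_diff field_simps)
      then show ?thesis by (simp only: powr_add[symmetric])
    qed
    also have "\<dots> = (2 / c) powr (real q / 2 - 1) * s powr (real q / 2 - 1)"
    proof -
      have e: "2 * s / c = (2 / c) * s" by simp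
      show ?thesis unfolding e by (rule powr_mult)
    qed
    finally show ?thesis unfolding K_def Gf_def by (simp only: exp_minus divide_inverse mult_ac)
  qed
  have int_fg: "set_integrable lborel (einterval 0 \<infinity>) (\<lambda>s. f (g s) * g' s)"
  proof -
    have "set_integrable lborel {0<..} (\<lambda>s. K * Gf s)"
      using GI(1) by (rule set_integrable_mult_right)
    then show ?thesis
      by (subst set_integrable_cong[of lborel lborel _ "{0<..}" _ "\<lambda>s. K * Gf s"]) (auto simp: fg zero_ereal_def)
  qed
  have der: "DERIV g x :> g' x" if "x > 0" for x
  proof -
    have p: "2 * x / c > 0" using that c by simp
    have d1: "((\<lambda>x. 2 * x / c) has_real_derivative 2 / c) (at x)"
      using c by (auto intro!: derivative_eq_intros)
    have d: "DERIV (\<lambda>x. sqrt (2 * x / c)) x :> inverse (sqrt (2 * x / c)) / 2 * (2 / c)"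
      by (rule DERIV_chain2[OF DERIV_real_sqrt[OF p] d1])
    have sq: "sqrt (2 * x / c) > 0" using p by simp
    have "inverse (sqrt (2 * x / c)) / 2 * (2 / c) = 1 / (c * sqrt (2 * x / c))"
      using sq c by (simp add: field_simps)
    then show ?thesis unfolding g_def g'_def using d by simp
  qed
  have contg': "isCont g' x" if "x > 0" for x
  proof -
    have p: "2 * x / c > 0" using that c by simp
    show ?thesis unfolding g'_def using p c by (intro continuous_intros) auto
  qed
  have contf: "isCont f y" for y unfolding f_def by (intro continuous_intros) auto
  have A: "((ereal \<circ> g \<circ> real_of_ereal) \<longlongrightarrow> 0) (at_right 0)"
  proof -
    have "isCont g 0" unfolding g_def using c by (intro continuous_intros) auto
    then have "(g \<longlongrightarrow> g 0) (at_right 0)" by (simp add: isCont_def filterlim_at_split)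
    then have "(g \<longlongrightarrow> 0) (at_right 0)" by (simp add: g_def)
    then show ?thesis unfolding zero_ereal_def by (simp only: ereal_tendsto_simps1 ereal_tendsto_simps2)
  qed
  have B: "((ereal \<circ> g \<circ> real_of_ereal) \<longlongrightarrow> \<infinity>) (at_left \<infinity>)"
  proof -
    have "filterlim (\<lambda>s. 2 * s / c) at_top at_top"
    proof -
      have "filterlim (\<lambda>s. (2 / c) * s) at_top at_top"
        by (rule filterlim_tendsto_pos_mult_at_top[OF tendsto_const _ filterlim_ident]) (use c in simp)
      moreover have "(\<lambda>s. (2 / c) * s) = (\<lambda>s. 2 * s / c)" by auto
      ultimately show ?thesis by simp
    qed
    then have "filterlim g at_top at_top" unfolding g_def by (rule filterlim_compose[OF sqrt_at_top])
    then show ?thesis by (simp only: ereal_tendsto_simps1 ereal_tendsto_simps2)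
  qed
  note S = interval_integral_substitution_nonneg[OF _ _ _ _ _ _ A B int_fg]
  have gnn: "0 \<le> g x" if "x \<ge> 0" for x unfolding g_def using that c by simp
  have sub1: "set_integrable lborel (einterval 0 \<infinity>) f"
    by (rule S(1)) (use der contg' contf c gnn in \<open>auto simp: zero_ereal_def f_def g'_def\<close>)
  have sub2: "(LBINT x=0..\<infinity>. f x) = (LBINT x=0..\<infinity>. f (g x) * g' x)"
    by (rule S(2)) (use der contg' contf c gnn in \<open>auto simp: zero_ereal_def f_def g'_def\<close>)
  show "set_integrable lborel {0<..} f" using sub1 sub2 by (simp add: zero_ereal_def)
  have "(LBINT x=0..\<infinity>. f (g x) * g' x) = (LBINT s:{0<..}. f (g s) * g' s)"
    unfolding interval_lebesgue_integral_def by (simp add: zero_ereal_def)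
  also have "\<dots> = (LBINT s:{0<..}. K * Gf s)"
    by (rule set_lebesgue_integral_cong) (auto simp: fg)
  also have "\<dots> = K * Gamma (real q / 2)" using GI(2) by (simp add: set_integral_mult_right)
  finally have "(LBINT t:{0<..}. f t) = K * Gamma (real q / 2)"
    using sub1 sub2 unfolding interval_lebesgue_integral_def by (simp add: zero_ereal_def)
  moreover have "K = (c / 2) powr (- real q / 2) / 2"
  proof -
    have "(2 / c) powr (real q / 2 - 1) = (2 / c) powr (real q / 2) * (c / 2)"
      using c by (simp add: powr_diff)
    moreover have "(2 / c) powr (real q / 2) = (c / 2) powr (- real q / 2)"
      using c by (simp add: powr_minus_divide powr_divide)
    ultimately show ?thesis unfolding K_def using c by (simp add: field_simps)
  qed
  ultimately show "(LBINT t:{0<..}. f t) = (c / 2) powr (- real q / 2) * Gamma (real q / 2) / 2" by simp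
qed


lemma set_int_le:
  fixes f g :: "real \<Rightarrow> real"
  assumes "set_integrable lborel A g" "\<And>t. t \<in> A \<Longrightarrow> f t \<le> g t" "\<And>t. t \<in> A \<Longrightarrow> 0 \<le> g t"
  shows "(LBINT t:A. f t) \<le> (LBINT t:A. g t)"
  unfolding set_lebesgue_integral_def
proof (rule integral_mono_AE')
  show "integrable lborel (\<lambda>t. indicator A t *\<^sub>R g t)" using assms(1) by (simp add: set_integrable_def)
  show "AE t in lborel. indicator A t *\<^sub>R f t \<le> indicator A t *\<^sub>R g t"
    using assms(2) by (auto simp: indicator_def)
  show "AE t in lborel. 0 \<le> indicator A t *\<^sub>R g t"
    using assms(3) by (auto simp: indicator_def)
qed

lemma set_int_subset_le:
  fixes g :: "real \<Rightarrow> real"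
  assumes "set_integrable lborel A g" "B \<subseteq> A" "\<And>t. t \<in> A \<Longrightarrow> 0 \<le> g t"
  shows "(LBINT t:B. g t) \<le> (LBINT t:A. g t)"
  unfolding set_lebesgue_integral_def
proof (rule integral_mono_AE')
  show "integrable lborel (\<lambda>t. indicator A t *\<^sub>R g t)" using assms(1) by (simp add: set_integrable_def)
  show "AE t in lborel. indicator B t *\<^sub>R g t \<le> indicator A t *\<^sub>R g t"
    using assms(2,3) by (auto simp: indicator_def)
  show "AE t in lborel. 0 \<le> indicator A t *\<^sub>R g t"
    using assms(3) by (auto simp: indicator_def)
qed

lemma exp_split_bound:
  fixes a c t :: real assumes "0 < a" "a \<le> t" "0 < c" "c < 1"
  shows "exp (- (t ^ 2) / 2) \<le> exp (- (a ^ 2) / 2 * (1 - c)) * exp (- (c * t ^ 2) / 2)"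
proof -
  have "a ^ 2 \<le> t ^ 2" using assms by (intro power_mono) auto
  then have "(1 - c) * a ^ 2 \<le> (1 - c) * t ^ 2" using assms by (intro mult_left_mono) auto
  then have "- (t ^ 2) / 2 \<le> - (a ^ 2) / 2 * (1 - c) + - (c * t ^ 2) / 2" by (simp add: field_simps)
  then have "exp (- (t ^ 2) / 2) \<le> exp (- (a ^ 2) / 2 * (1 - c) + - (c * t ^ 2) / 2)" by simp
  then show ?thesis by (simp only: exp_add)
qed

lemma Jq_bound:
  fixes a c :: real and q :: nat assumes a: "0 < a" and c: "0 < c" "c < 1" and q: "q \<ge> 1"
  shows "2 * (LBINT t:{a..}. t ^ (q - 1) * exp (- (t ^ 2) / 2))
     \<le> exp (- (a ^ 2) / 2 * (1 - c)) * ((c / 2) powr (- real q / 2) * Gamma (real q / 2))"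
proof -
  define E where "E = exp (- (a ^ 2) / 2 * (1 - c))"
  define h where "h = (\<lambda>t::real. t ^ (q - 1) * exp (- (c * t ^ 2) / 2))"
  have hi: "set_integrable lborel {0<..} h" unfolding h_def by (rule gauss_mom(1)[OF c(1) q])
  have hv: "(LBINT t:{0<..}. h t) = (c / 2) powr (- real q / 2) * Gamma (real q / 2) / 2"
    unfolding h_def by (rule gauss_mom(2)[OF c(1) q])
  have sub: "{a..} \<subseteq> {0<..}" using a by auto
  have hia: "set_integrable lborel {a..} h" by (rule set_integrable_subset[OF hi _ sub]) auto
  have hnn: "0 \<le> h t" if "t \<in> {0<..}" for t using that by (simp add: h_def)
  have "(LBINT t:{a..}. t ^ (q - 1) * exp (- (t ^ 2) / 2)) \<le> (LBINT t:{a..}. E * h t)"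
  proof (rule set_int_le)
    show "set_integrable lborel {a..} (\<lambda>t. E * h t)" using hia by simp
    fix t assume t: "t \<in> {a..}"
    then have t0: "t > 0" using a by simp
    have "t ^ (q - 1) * exp (- (t ^ 2) / 2) \<le> t ^ (q - 1) * (E * exp (- (c * t ^ 2) / 2))"
      using exp_split_bound[of a t c] t a c t0 unfolding E_def by (intro mult_left_mono) auto
    then show "t ^ (q - 1) * exp (- (t ^ 2) / 2) \<le> E * h t" by (simp add: h_def algebra_simps)
    show "0 \<le> E * h t" using hnn[of t] t0 by (simp add: E_def)
  qed
  also have "\<dots> = E * (LBINT t:{a..}. h t)" by simp
  also have "\<dots> \<le> E * (LBINT t:{0<..}. h t)"
    using set_int_subset_le[OF hi sub hnn] by (simp add: E_def)
  finally show ?thesis unfolding hv E_def by simp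
qed


lemma J0_bound:
  fixes a c :: real assumes a: "0 < a" and c: "0 < c" "c < 1"
  shows "2 * (LBINT t:{a..}. inverse t * exp (- (t ^ 2) / 2))
     < exp (- (a ^ 2) / 2 * (1 - c)) * (1 / a * sqrt (2 * pi / c))"
proof -
  define E where "E = exp (- (a ^ 2) / 2 * (1 - c))"
  define h where "h = (\<lambda>t::real. exp (- (c * t ^ 2) / 2))"
  have hi: "set_integrable lborel {0<..} h"
    using gauss_mom(1)[OF c(1), of 1] unfolding h_def by simp
  have hv0: "(LBINT t:{0<..}. h t) = (c / 2) powr (- real 1 / 2) * Gamma (real 1 / 2) / 2"
    using gauss_mom(2)[OF c(1), of 1] unfolding h_def by simp
  have "(c / 2) powr (- real 1 / 2) = inverse (sqrt (c / 2))"
  proof -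
    have "(c / 2) powr (- real 1 / 2) = inverse ((c / 2) powr (1 / 2))"
      by (simp add: powr_minus[symmetric])
    also have "(c / 2) powr (1 / 2) = sqrt (c / 2)" by (rule powr_half_sqrt) (use c in simp)
    finally show ?thesis .
  qed
  moreover have "inverse (sqrt (c / 2)) * sqrt pi = sqrt (2 * pi / c)"
    using c by (simp add: real_sqrt_divide real_sqrt_mult field_simps)
  ultimately have hv: "(LBINT t:{0<..}. h t) = sqrt (2 * pi / c) / 2"
    using hv0 by (simp add: Gamma_one_half_real)
  have sub: "{a..} \<subseteq> {0<..}" using a by auto
  have hia: "set_integrable lborel {a..} h" by (rule set_integrable_subset[OF hi _ sub]) auto
  have sub2: "{0<..<a} \<subseteq> {0<..}" by auto
  have hib: "set_integrable lborel {0<..<a} h" by (rule set_integrable_subset[OF hi _ sub2]) auto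
  have ci: "set_integrable lborel {0<..<a} (\<lambda>_. exp (- (c * a ^ 2) / 2))"
  proof -
    have "set_integrable lborel {0..a} (\<lambda>_. exp (- (c * a ^ 2) / 2))"
      by (rule borel_integrable_atLeastAtMost') (rule continuous_on_const)
    then show ?thesis by (rule set_integrable_subset) auto
  qed
  have "(LBINT t:{0<..<a}. exp (- (c * a ^ 2) / 2)) \<le> (LBINT t:{0<..<a}. h t)"
  proof (rule set_integral_mono[OF ci hib])
    fix t assume t: "t \<in> {0<..<a}"
    then have "t ^ 2 \<le> a ^ 2" by (intro power_mono) auto
    then have "c * t ^ 2 \<le> c * a ^ 2" using c by (intro mult_left_mono) auto
    then show "exp (- (c * a ^ 2) / 2) \<le> h t" unfolding h_def by simp
  qed
  moreover have "(LBINT t:{0<..<a}. exp (- (c * a ^ 2) / 2)) = a * exp (- (c * a ^ 2) / 2)"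
    using a by (subst set_integral_const) auto
  moreover have "a * exp (- (c * a ^ 2) / 2) > 0" using a by simp
  ultimately have pos: "(LBINT t:{0<..<a}. h t) > 0" by linarith
  have un: "{0<..} = {0<..<a} \<union> {a..}" using a by auto
  have "(LBINT t:{0<..}. h t) = (LBINT t:{0<..<a}. h t) + (LBINT t:{a..}. h t)"
    unfolding un by (rule set_integral_Un[OF _ hib hia]) auto
  then have lt: "(LBINT t:{a..}. h t) < sqrt (2 * pi / c) / 2" using pos hv by linarith
  have Ea: "E / a > 0" using a by (simp add: E_def)
  have "(LBINT t:{a..}. inverse t * exp (- (t ^ 2) / 2)) \<le> (LBINT t:{a..}. (E / a) * h t)"
  proof (rule set_int_le)
    show "set_integrable lborel {a..} (\<lambda>t. E / a * h t)" using hia by simp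
    fix t assume t: "t \<in> {a..}"
    then have t0: "t > 0" using a by simp
    have i: "inverse t \<le> 1 / a" using t a by (simp add: field_simps)
    have "inverse t * exp (- (t ^ 2) / 2) \<le> (1 / a) * (E * h t)"
    proof (rule mult_mono)
      show "exp (- (t ^ 2) / 2) \<le> E * h t"
        using exp_split_bound[of a t c] t a c unfolding E_def h_def by auto
    qed (use i t0 a in auto)
    then show "inverse t * exp (- (t ^ 2) / 2) \<le> E / a * h t" by simp
    show "0 \<le> E / a * h t" using Ea by (intro mult_nonneg_nonneg) (auto simp: h_def)
  qed
  also have "\<dots> = (E / a) * (LBINT t:{a..}. h t)" by simp
  also have "\<dots> < (E / a) * (sqrt (2 * pi / c) / 2)" by (rule mult_strict_left_mono[OF lt Ea])
  finally show ?thesis unfolding E_def by simp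
qed



lemma tail_xexp:
  fixes a :: real assumes a: "0 < a"
  shows "set_integrable lborel {a..} (\<lambda>t. t * exp (- (t ^ 2) / 2))"
    and "(LBINT t:{a..}. t * exp (- (t ^ 2) / 2)) = exp (- (a ^ 2) / 2)"
proof -
  define k where "k = (\<lambda>t::real. t * exp (- (t ^ 2) / 2))"
  define F where "F = (\<lambda>t::real. - exp (- (t ^ 2) / 2))"
  have D: "DERIV F x :> k x" for x
    unfolding F_def k_def by (auto intro!: derivative_eq_intros simp: power2_eq_square)
  have C: "isCont k x" for x unfolding k_def by (intro continuous_intros) auto
  have A: "((F \<circ> real_of_ereal) \<longlongrightarrow> F a) (at_right (ereal a))"
  proof -
    have "isCont F a" unfolding F_def by (intro continuous_intros) auto
    then have "(F \<longlongrightarrow> F a) (at_right a)" by (simp add: isCont_def filterlim_at_split)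
    then show ?thesis by (simp only: ereal_tendsto_simps1)
  qed
  have B: "((F \<circ> real_of_ereal) \<longlongrightarrow> 0) (at_left \<infinity>)"
  proof -
    have "(F \<longlongrightarrow> 0) at_top" unfolding F_def by real_asymp
    then show ?thesis by (simp only: ereal_tendsto_simps1)
  qed
  have nn: "AE x in lborel. ereal a < ereal x \<longrightarrow> ereal x < \<infinity> \<longrightarrow> 0 \<le> k x"
    using a by (auto simp: k_def)
  note R = interval_integral_FTC_nonneg[of "ereal a" \<infinity> F k, OF _ _ _ nn A B]
  have i1: "set_integrable lborel {a<..} k" using R(1)[OF _ D C] by simp
  have v1: "(LBINT t:{a<..}. k t) = 0 - F a"
    using R(2)[OF _ D C] by (simp add: interval_lebesgue_integral_def)
  have meas: "set_borel_measurable lborel {a..} k" "set_borel_measurable lborel {a<..} k"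
    unfolding set_borel_measurable_def k_def by measurable
  have ae: "AE x in lborel. x \<in> {a<..} \<longleftrightarrow> x \<in> {a..}"
    using AE_lborel_singleton[of a] by eventually_elim auto
  show "set_integrable lborel {a..} (\<lambda>t. t * exp (- (t ^ 2) / 2))"
  proof -
    have "set_integrable lborel ({a<..} \<union> {a}) k"
      by (rule set_integrable_Un[OF i1]) auto
    moreover have "{a<..} \<union> {a} = {a..}" by auto
    ultimately show ?thesis by (simp add: k_def)
  qed
  have "(LBINT t:{a..}. k t) = (LBINT t:{a<..}. k t)"
    by (rule set_integral_cong_set[OF meas(2) meas(1) ae])
  then show "(LBINT t:{a..}. t * exp (- (t ^ 2) / 2)) = exp (- (a ^ 2) / 2)"
    using v1 by (simp add: k_def F_def)
qed


lemma J0_tilde: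
  fixes a c :: real assumes a: "sqrt 2 \<le> a" and c: "0 < c" "c < 1"
  shows "2 * (LBINT t:{a..}. inverse t * exp (- (t ^ 2) / 2)) < exp (- (a ^ 2) / 2 * (1 - c))"
proof -
  have a0: "0 < a" using a by (smt (verit) real_sqrt_gt_zero)
  have a2: "2 \<le> a ^ 2" using a a0 by (metis real_sqrt_le_iff real_sqrt_pow2 power_mono zero_le_numeral real_sqrt_ge_zero less_imp_le)
  have "(LBINT t:{a..}. inverse t * exp (- (t ^ 2) / 2)) \<le> (LBINT t:{a..}. (1 / a ^ 2) * (t * exp (- (t ^ 2) / 2)))"
  proof (rule set_int_le)
    show "set_integrable lborel {a..} (\<lambda>t. 1 / a ^ 2 * (t * exp (- (t ^ 2) / 2)))"
      using tail_xexp(1)[OF a0] by simp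
    fix t assume t: "t \<in> {a..}"
    then have t0: "t > 0" using a0 by simp
    have "a ^ 2 \<le> t ^ 2" using t a0 by (intro power_mono) auto
    then have "inverse t \<le> 1 / a ^ 2 * t" using t0 a0 by (simp add: field_simps power2_eq_square)
    then show "inverse t * exp (- (t ^ 2) / 2) \<le> 1 / a ^ 2 * (t * exp (- (t ^ 2) / 2))"
      using mult_right_mono[of "inverse t" "1 / a ^ 2 * t" "exp (- (t ^ 2) / 2)"] by (simp add: mult.assoc)
    show "0 \<le> 1 / a ^ 2 * (t * exp (- (t ^ 2) / 2))" using t0 by simp
  qed
  also have "\<dots> = (1 / a ^ 2) * exp (- (a ^ 2) / 2)"
    using tail_xexp(2)[OF a0] by simp
  finally have "2 * (LBINT t:{a..}. inverse t * exp (- (t ^ 2) / 2)) \<le> (2 / a ^ 2) * exp (- (a ^ 2) / 2)" by simp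
  also have "\<dots> \<le> exp (- (a ^ 2) / 2)"
  proof -
    have "2 / a ^ 2 \<le> 1" using a2 a0 by (simp add: divide_le_eq_1)
    then show ?thesis using mult_right_mono[of "2 / a ^ 2" 1 "exp (- (a ^ 2) / 2)"] by simp
  qed
  also have "\<dots> < exp (- (a ^ 2) / 2 * (1 - c))"
  proof -
    have "0 < c * a ^ 2" using a0 c by simp
    then show ?thesis by (simp add: algebra_simps)
  qed
  finally show ?thesis .
qed

lemma gamma_kj_nonneg:
  assumes "p1 \<ge> 1" "p1 + p2 \<ge> 2" "n \<ge> n1" "n1 > p1 + p2"
  shows "gamma_kj p1 p2 n n1 k j \<ge> 0"
  unfolding gamma_kj_def
proof (intro sum_nonneg prod_nonneg)
  fix \<sigma> :: "nat \<Rightarrow> nat" and i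
  have k2: "kappa p1 p2 n n1 2 > 0" by (rule kappa_pos) (use assms in auto)
  have kr: "kappa p1 p2 n n1 (\<sigma> i + 3) > 0" by (rule kappa_pos) (use assms in auto)
  have "kappa_tilde p1 p2 n n1 (\<sigma> i + 3) > 0"
    unfolding kappa_tilde_def using k2 kr by simp
  then show "0 \<le> kappa_tilde p1 p2 n n1 (\<sigma> i + 3) / fact (\<sigma> i + 3)" by simp
qed

theorem mainTheorem2:
  fixes p1 p2 n n1 s :: nat and v c :: real
  assumes "p1 \<ge> 1" and "p1 + p2 \<ge> 2" and "n \<ge> n1" and "n1 > p1 + p2" and "s \<ge> 1"
    and "0 < v" and "v < 1" and "0 < c" and "c < 1"
  shows "I2 p1 p2 n n1 s v < U2 p1 p2 n n1 s v c \<and>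
    ((m_param p1 p2 n n1 * v \<ge> sqrt 2 \<or> m_param p1 p2 n n1 * v > sqrt (2 * pi / c))
       \<longrightarrow> I2 p1 p2 n n1 s v < U2_tilde p1 p2 n n1 s v c)"
proof -
  note A = assms
  define a where "a = m_param p1 p2 n n1 * v"
  define E where "E = exp (- (a ^ 2) / 2 * (1 - c))"
  have k2: "kappa p1 p2 n n1 2 > 0" by (rule kappa_pos) (use A in auto)
  have "real n1 - real (p1 + p2) - 1 / 2 > 0" using A(4) by linarith
  then have mpos: "m_param p1 p2 n n1 > 0" unfolding m_param_def using k2 by simp
  have a0: "a > 0" unfolding a_def using mpos A(6) by simp
  have E0: "E > 0" by (simp add: E_def)
  define J where "J = (\<lambda>q::nat. LBINT t:{a..}. t ^ (q - 1) * exp (- (t ^ 2) / 2))"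
  define J0 where "J0 = (LBINT t:{a..}. inverse t * exp (- (t ^ 2) / 2))"
  define S where "S = (\<Sum>k=1..s. 1 / fact k * (\<Sum>j=0..s-k. gamma_kj p1 p2 n n1 k j * J (3*k + j)))"
  have I2eq: "I2 p1 p2 n n1 s v = 2 * J0 + 2 * S"
    unfolding I2_def Let_def a_def[symmetric] J_def J0_def S_def by simp
  have gnn: "gamma_kj p1 p2 n n1 k j \<ge> 0" for k j by (rule gamma_kj_nonneg) (use A in auto)
  have Sle: "2 * S \<le> E * U2_sum p1 p2 n n1 s c"
  proof -
    have "2 * S = (\<Sum>k=1..s. 1 / fact k * (\<Sum>j=0..s-k. gamma_kj p1 p2 n n1 k j * (2 * J (3*k + j))))"
      unfolding S_def sum_distrib_left by (intro sum.cong refl) (simp add: algebra_simps)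
    also have "\<dots> \<le> (\<Sum>k=1..s. 1 / fact k * (\<Sum>j=0..s-k. gamma_kj p1 p2 n n1 k j *
        (E * ((c / 2) powr (- real (3*k + j) / 2) * Gamma (real (3*k + j) / 2)))))"
    proof (intro sum_mono mult_left_mono)
      fix k j assume k: "k \<in> {1..s}"
      show "2 * J (3*k + j) \<le> E * ((c / 2) powr (- real (3*k + j) / 2) * Gamma (real (3*k + j) / 2))"
        unfolding J_def E_def by (rule Jq_bound[OF a0 A(8) A(9)]) (use k in auto)
    qed (use gnn in auto)
    also have "\<dots> = E * U2_sum p1 p2 n n1 s c"
      unfolding U2_sum_def sum_distrib_left by (intro sum.cong refl) (simp add: algebra_simps)
    finally show ?thesis .
  qed
  have J0b: "2 * J0 < E * (1 / a * sqrt (2 * pi / c))"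
    unfolding J0_def E_def by (rule J0_bound[OF a0 A(8) A(9)])
  have U2eq: "U2 p1 p2 n n1 s v c = E * (1 / a * sqrt (2 * pi / c)) + E * U2_sum p1 p2 n n1 s c"
    unfolding U2_def Let_def a_def[symmetric] E_def by (simp add: algebra_simps)
  have U2teq: "U2_tilde p1 p2 n n1 s v c = E + E * U2_sum p1 p2 n n1 s c"
    unfolding U2_tilde_def Let_def a_def[symmetric] E_def by (simp add: algebra_simps)
  have part1: "I2 p1 p2 n n1 s v < U2 p1 p2 n n1 s v c"
    unfolding I2eq U2eq using J0b Sle by linarith
  have part2: "I2 p1 p2 n n1 s v < U2_tilde p1 p2 n n1 s v c"
    if h: "m_param p1 p2 n n1 * v \<ge> sqrt 2 \<or> m_param p1 p2 n n1 * v > sqrt (2 * pi / c)"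
  proof -
    have "2 * J0 < E"
    proof (cases "sqrt 2 \<le> a")
      case True
      show ?thesis unfolding J0_def E_def by (rule J0_tilde[OF True A(8) A(9)])
    next
      case False
      then have ha: "a > sqrt (2 * pi / c)" using h unfolding a_def by auto
      then have lt1: "1 / a * sqrt (2 * pi / c) < 1" using a0 by (simp add: field_simps)
      have "E * (1 / a * sqrt (2 * pi / c)) < E" using mult_strict_left_mono[OF lt1 E0] by simp
      then show ?thesis using J0b by linarith
    qed
    then show ?thesis unfolding I2eq U2teq using Sle by linarith
  qed
  show ?thesis using part1 part2 by blast
qed

end
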